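(* Let $d\ge3$, $n\ge1$, $0\le c<\frac{1}{d(d-1)}$, and let $$\rho(c,0)=\Big(\frac1{2d}-\frac{d-1}2c\Big)\sum_{i=0}^{d-1}|ii\rangle\langle ii|+\frac1{d(d-1)}\sum_{i<j}|\psi^-_{ij}\rangle\langle\psi^-_{ij}|+c\sum_{i<j}|\psi^+_{ij}\rangle\langle\psi^+_{ij}|.$$ Then the null space of $(\rho(c,0)^{PT})^{\otimes n}$ contains no nonzero vector of Schmidt rank less than three of the form $$|\psi\rangle=\sum_{i_1,\dots,i_n=0}^{d-1}a_{i_1\dots i_n}|\Phi_{i_1}\rangle\otimes\cdots\otimes|\Phi_{i_n}\rangle,$$ where $|\Phi_k\rangle=\frac1{\sqrt d}\sum_{j=0}^{d-1}e^{2\pi ijk/d}|jj\rangle$.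
   Context: $|\psi^{\pm}_{ij}\rangle=\frac1{\sqrt2}(|ij\rangle\pm|ji\rangle)$, sums over $0\le i<j\le d-1$. $\rho^{PT}$ is the partial transpose on the second factor of $\mathbb{C}^d\otimes\mathbb{C}^d$. The $n$-fold tensor product acts on $(\mathbb{C}^d\otimes\mathbb{C}^d)^{\otimes n}$, regarded as a bipartite space $(\mathbb{C}^d)^{\otimes n}_A\otimes(\mathbb{C}^d)^{\otimes n}_B$ with the first factor of each copy belonging to $A$; Schmidt rank is with respect to this bipartition. *)

theory Defs
  imports Complex_Main
begin

text \<open>Vectors in C^d (x) C^d are functions nat => nat => complex (entry at |a b>),
operators are functions of (a,b) and (a',b'): entry <a b| M |a' b'>.\<close>

definition ket2 :: "nat \<Rightarrow> nat \<Rightarrow> nat \<Rightarrow> nat \<Rightarrow> complex" where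
  "ket2 i j = (\<lambda>a b. if a = i \<and> b = j then 1 else 0)"

definition psi_pm :: "complex \<Rightarrow> nat \<Rightarrow> nat \<Rightarrow> nat \<Rightarrow> nat \<Rightarrow> complex" where
  "psi_pm s i j = (\<lambda>a b. (ket2 i j a b + s * ket2 j i a b) / of_real (sqrt 2))"

definition proj :: "(nat \<Rightarrow> nat \<Rightarrow> complex) \<Rightarrow> nat \<Rightarrow> nat \<Rightarrow> nat \<Rightarrow> nat \<Rightarrow> complex" where
  "proj v = (\<lambda>a b a' b'. v a b * cnj (v a' b'))"

definition pairs_lt :: "nat \<Rightarrow> (nat \<times> nat) set" where
  "pairs_lt d = {(i, j). i < j \<and> j < d}"

definition rho :: "nat \<Rightarrow> real \<Rightarrow> nat \<Rightarrow> nat \<Rightarrow> nat \<Rightarrow> nat \<Rightarrow> complex" where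
  "rho d c = (\<lambda>a b a' b'.
     of_real (1 / (2 * real d) - (real d - 1) / 2 * c) * (\<Sum>i<d. proj (ket2 i i) a b a' b')
   + of_real (1 / (real d * (real d - 1))) * (\<Sum>(i,j)\<in>pairs_lt d. proj (psi_pm (-1) i j) a b a' b')
   + of_real c * (\<Sum>(i,j)\<in>pairs_lt d. proj (psi_pm 1 i j) a b a' b'))"

definition ptrans :: "(nat \<Rightarrow> nat \<Rightarrow> nat \<Rightarrow> nat \<Rightarrow> complex) \<Rightarrow> nat \<Rightarrow> nat \<Rightarrow> nat \<Rightarrow> nat \<Rightarrow> complex" where
  "ptrans M = (\<lambda>a b a' b'. M a b' a' b)"

text \<open>A vector of (C^d (x) C^d)^{(x) n}, viewed as (C^d)^{(x)n}_A (x) (C^d)^{(x)n}_B,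
is a function of the A-index list x and the B-index list y.\<close>
definition idx :: "nat \<Rightarrow> nat \<Rightarrow> nat list set" where
  "idx d n = {xs. length xs = n \<and> set xs \<subseteq> {..<d}}"

definition tpow_op :: "nat \<Rightarrow> (nat \<Rightarrow> nat \<Rightarrow> nat \<Rightarrow> nat \<Rightarrow> complex)
    \<Rightarrow> nat list \<Rightarrow> nat list \<Rightarrow> nat list \<Rightarrow> nat list \<Rightarrow> complex" where
  "tpow_op n M = (\<lambda>x y x' y'. \<Prod>k<n. M (x!k) (y!k) (x'!k) (y'!k))"

definition apply_op :: "nat \<Rightarrow> nat \<Rightarrow> (nat list \<Rightarrow> nat list \<Rightarrow> nat list \<Rightarrow> nat list \<Rightarrow> complex)
    \<Rightarrow> (nat list \<Rightarrow> nat list \<Rightarrow> complex) \<Rightarrow> nat list \<Rightarrow> nat list \<Rightarrow> complex" where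
  "apply_op d n T v = (\<lambda>x y. \<Sum>x'\<in>idx d n. \<Sum>y'\<in>idx d n. T x y x' y' * v x' y')"

definition in_null_space :: "nat \<Rightarrow> nat \<Rightarrow> (nat list \<Rightarrow> nat list \<Rightarrow> nat list \<Rightarrow> nat list \<Rightarrow> complex)
    \<Rightarrow> (nat list \<Rightarrow> nat list \<Rightarrow> complex) \<Rightarrow> bool" where
  "in_null_space d n T v \<longleftrightarrow> (\<forall>x\<in>idx d n. \<forall>y\<in>idx d n. apply_op d n T v x y = 0)"

definition nonzero_vec :: "nat \<Rightarrow> nat \<Rightarrow> (nat list \<Rightarrow> nat list \<Rightarrow> complex) \<Rightarrow> bool" where
  "nonzero_vec d n v \<longleftrightarrow> (\<exists>x\<in>idx d n. \<exists>y\<in>idx d n. v x y \<noteq> 0)"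

definition schmidt_rank :: "nat \<Rightarrow> nat \<Rightarrow> (nat list \<Rightarrow> nat list \<Rightarrow> complex) \<Rightarrow> nat" where
  "schmidt_rank d n v = (LEAST r. \<exists>u w :: nat \<Rightarrow> nat list \<Rightarrow> complex.
       \<forall>x\<in>idx d n. \<forall>y\<in>idx d n. v x y = (\<Sum>m<r. u m x * w m y))"

definition Phi :: "nat \<Rightarrow> nat \<Rightarrow> nat \<Rightarrow> nat \<Rightarrow> complex" where
  "Phi d k = (\<lambda>a b. if a = b \<and> a < d
      then exp (2 * of_real pi * \<i> * of_nat a * of_nat k / of_nat d) / of_real (sqrt (real d))
      else 0)"

definition phi_comb :: "nat \<Rightarrow> nat \<Rightarrow> (nat list \<Rightarrow> complex) \<Rightarrow> nat list \<Rightarrow> nat list \<Rightarrow> complex" where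
  "phi_comb d n coef = (\<lambda>x y. \<Sum>is\<in>idx d n. coef is * (\<Prod>k<n. Phi d (is!k) (x!k) (y!k)))"

end

theory Submission imports Defs begin

lemma ket_sum: assumes "a < d" "a' < d"
  shows "(\<Sum>i<d. proj (ket2 i i) a a' a' a) = (if a = a' then 1 else 0)"
proof -
  have "(\<Sum>i<d. proj (ket2 i i) a a' a' a) = (\<Sum>i<d. if i = a then (if a = a' then 1 else 0) else 0)"
    by (rule sum.cong) (auto simp: proj_def ket2_def)
  also have "\<dots> = (if a = a' then 1 else 0)" using assms by simp
  finally show ?thesis .
qed

lemma sq2: "complex_of_real (sqrt 2) * complex_of_real (sqrt 2) = 2"
  by (simp flip: of_real_mult)

lemma psi_pt:
  assumes "i < j" "cnj s = s"
  shows "proj (psi_pm s i j) a a' a' a = (if (i,j) = (min a a', max a a') \<and> a \<noteq> a' then s/2 else 0)"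
  using assms by (auto simp: proj_def psi_pm_def ket2_def min_def max_def sq2)

lemma finite_pairs: "finite (pairs_lt d)"
  by (rule finite_subset[of _ "{..<d} \<times> {..<d}"]) (auto simp: pairs_lt_def)

lemma psi_sum:
  assumes "a < d" "a' < d" "cnj s = s"
  shows "(\<Sum>(i,j)\<in>pairs_lt d. proj (psi_pm s i j) a a' a' a) = (if a = a' then 0 else s/2)"
proof -
  have "(\<Sum>(i,j)\<in>pairs_lt d. proj (psi_pm s i j) a a' a' a)
      = (\<Sum>ij\<in>pairs_lt d. if ij = (min a a', max a a') then (if a \<noteq> a' then s/2 else 0) else 0)"
  proof (rule sum.cong)
    fix ij assume "ij \<in> pairs_lt d"
    then obtain i j where "ij = (i,j)" "i < j" by (auto simp: pairs_lt_def)
    then show "(case ij of (i,j) \<Rightarrow> proj (psi_pm s i j) a a' a' a) = (if ij = (min a a', max a a') then (if a \<noteq> a' then s/2 else 0) else 0)"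
      using psi_pt[OF _ assms(3)] by auto
  qed simp
  also have "\<dots> = (if a = a' then 0 else s/2)"
    using assms finite_pairs by (auto simp: pairs_lt_def min_def max_def)
  finally show ?thesis .
qed

lemma rho_diag:
  assumes "a < d" "a' < d"
  shows "rho d c a a' a' a = (if a = a' then of_real (1 / (2 * real d) - (real d - 1) / 2 * c)
          else of_real ((c - 1 / (real d * (real d - 1))) / 2))"
  using assms by (simp add: rho_def ket_sum psi_sum of_real_diff of_real_divide diff_divide_distrib)

lemma det3:
  fixes a1 a2 a3 b1 b2 b3 c1 c2 c3 e1 e2 e3 :: complex
  assumes "a1*b2 + c1*e2 = 0" "a1*b3 + c1*e3 = 0" "a2*b1 + c2*e1 = 0"
    "a2*b3 + c2*e3 = 0" "a3*b1 + c3*e1 = 0" "a3*b2 + c3*e2 = 0"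
  shows "(a1*b1 + c1*e1) * (a2*b2 + c2*e2) * (a3*b3 + c3*e3) = 0"
  using assms by algebra


lemma finite_idx: "finite (idx d n)"
proof -
  have "idx d n = {xs. set xs \<subseteq> {..<d} \<and> length xs = n}" by (auto simp: idx_def)
  then show ?thesis using finite_lists_length_eq[of "{..<d}" n] by simp
qed

lemma exists_decomp:
  "\<exists>(r::nat) u w. \<forall>x\<in>idx d n. \<forall>y\<in>idx d n. (v::nat list \<Rightarrow> nat list \<Rightarrow> complex) x y = (\<Sum>m<r. u m x * w m y)"
proof -
  obtain h where h: "bij_betw h {0..<card (idx d n)} (idx d n)"
    using ex_bij_betw_nat_finite[OF finite_idx] by blast
  have "\<forall>x\<in>idx d n. \<forall>y\<in>idx d n. v x y =
     (\<Sum>m<card (idx d n). (\<lambda>m x. if x = h m then 1 else 0) m x * (\<lambda>m y. v (h m) y) m y)"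
  proof (intro ballI)
    fix x y assume x: "x \<in> idx d n"
    have "(\<Sum>m<card (idx d n). (if x = h m then 1 else 0) * v (h m) y)
        = (\<Sum>m\<in>{0..<card (idx d n)}. (\<lambda>z. if z = x then v z y else 0) (h m))"
      by (rule sum.cong) auto
    also have "\<dots> = (\<Sum>z\<in>idx d n. if z = x then v z y else 0)"
      by (rule sum.reindex_bij_betw[OF h])
    also have "\<dots> = v x y" using x finite_idx by simp
    finally show "v x y = (\<Sum>m<card (idx d n). (\<lambda>m x. if x = h m then 1 else 0) m x * (\<lambda>m y. v (h m) y) m y)"
      by simp
  qed
  note * = this
  show ?thesis
    apply (rule exI[where x="card (idx d n)"])
    apply (rule exI[where x="\<lambda>m x. if x = h m then (1::complex) else 0"])
    apply (rule exI[where x="\<lambda>m y. v (h m) y"])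
    using * by simp
qed

lemma diff_idx: "length p = n \<Longrightarrow> length q = n \<Longrightarrow> p \<noteq> q \<Longrightarrow> \<exists>k<n. p!k \<noteq> q!k"
  by (auto simp: list_eq_iff_nth_eq)

lemma rank2:
  assumes "(r::nat) < 3"
  shows "(\<Sum>m<r. u m x * w m y) = (if 0<r then u 0 x else 0) * w 0 y + (if 1<r then u 1 x else 0) * (w 1 y :: complex)"
proof -
  have "r = 0 \<or> r = 1 \<or> r = 2" using assms by auto
  then show ?thesis by (auto simp: numeral_2_eq_2)
qed

theorem lemma5:
  fixes d n :: nat and c :: real and coef :: "nat list \<Rightarrow> complex"
  assumes "d \<ge> 3" and "n \<ge> 1" and "0 \<le> c" and "c < 1 / (real d * (real d - 1))"
    and "nonzero_vec d n (phi_comb d n coef)"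
    and "schmidt_rank d n (phi_comb d n coef) < 3"
  shows "\<not> in_null_space d n (tpow_op n (ptrans (rho d c))) (phi_comb d n coef)"
proof
  assume null: "in_null_space d n (tpow_op n (ptrans (rho d c))) (phi_comb d n coef)"
  define v where "v = phi_comb d n coef"
  define T where "T = tpow_op n (ptrans (rho d c))"
  define D where "D = real d"
  define \<beta> where "\<beta> = 1 / (D * (D - 1))"
  define \<alpha> where "\<alpha> = 1 / (2 * D) - (D - 1) / 2 * c"
  define \<gamma> where "\<gamma> = (c - \<beta>) / 2"
  define g where "g = (\<lambda>a a'::nat. if a = a' then \<alpha> else \<gamma>)"
  define G where "G = (\<lambda>x x'::nat list. \<Prod>k<n. g (x!k) (x'!k))"
  have D3: "D \<ge> 3" using assms(1) by (simp add: D_def)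
  have cb: "c < \<beta>" using assms(4) by (simp add: \<beta>_def D_def)
  have b1: "D * (D - 1) * \<beta> = 1" using D3 by (simp add: \<beta>_def)
  have a_eq: "\<alpha> = (D - 1) * (\<beta> - c) / 2"
  proof -
    have "1 / (2 * D) = (D - 1) * \<beta> / 2" using D3 b1 by (simp add: field_simps)
    then have "\<alpha> = (D - 1) * \<beta> / 2 - (D - 1) / 2 * c" by (simp add: \<alpha>_def)
    moreover have "(D - 1) * (\<beta> - c) / 2 = (D - 1) * \<beta> / 2 - (D - 1) / 2 * c"
      by (simp add: field_simps)
    ultimately show ?thesis by linarith
  qed
  have apos: "\<alpha> > 0"
  proof -
    have "(D - 1) * (\<beta> - c) > 0" using cb D3 by (intro mult_pos_pos) auto
    then show ?thesis using a_eq by linarith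
  qed
  have ag1: "\<alpha> + \<gamma> > 0"
  proof -
    have "(D - 2) * (\<beta> - c) > 0" using cb D3 by (intro mult_pos_pos) auto
    moreover have "\<alpha> + \<gamma> = (D - 2) * (\<beta> - c) / 2" using a_eq unfolding \<gamma>_def by (simp add: field_simps)
    ultimately show ?thesis by simp
  qed
  have ag2: "\<alpha> - \<gamma> > 0" using apos cb by (simp add: \<gamma>_def)
  have gabs: "\<bar>g a a'\<bar> \<le> \<alpha>" for a a' using ag1 ag2 by (auto simp: g_def)
  have idx_lt: "x!k < d" if "x \<in> idx d n" "k < n" for x k
    using that nth_mem[of k x] unfolding idx_def by blast
  have idx_len: "length x = n" if "x \<in> idx d n" for x using that by (simp add: idx_def)
  have Tdiag: "T x x x' x' = of_real (G x x')" if "x \<in> idx d n" "x' \<in> idx d n" for x x'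
  proof -
    have "T x x x' x' = (\<Prod>k<n. rho d c (x!k) (x'!k) (x'!k) (x!k))"
      by (simp add: T_def tpow_op_def ptrans_def)
    also have "\<dots> = (\<Prod>k<n. of_real (g (x!k) (x'!k)))"
      by (rule prod.cong) (auto simp: rho_diag idx_lt that g_def \<alpha>_def \<gamma>_def \<beta>_def D_def)
    also have "\<dots> = of_real (G x x')" by (simp add: G_def)
    finally show ?thesis .
  qed
  have Gpp: "G p p = \<alpha> ^ n" for p by (simp add: G_def g_def)
  have Gsym: "G p q = G q p" for p q by (simp add: G_def g_def eq_commute)
  have Gless: "\<bar>G p q\<bar> < \<alpha> ^ n" if pq: "p \<in> idx d n" "q \<in> idx d n" "p \<noteq> q" for p q
  proof -
    obtain k0 where k0: "k0 < n" "p!k0 \<noteq> q!k0"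
      using diff_idx[OF idx_len[OF pq(1)] idx_len[OF pq(2)] pq(3)] by blast
    have "\<bar>G p q\<bar> = (\<Prod>k<n. \<bar>g (p!k) (q!k)\<bar>)" by (simp add: G_def abs_prod)
    also have "\<dots> = \<bar>g (p!k0) (q!k0)\<bar> * (\<Prod>k\<in>{..<n}-{k0}. \<bar>g (p!k) (q!k)\<bar>)"
      using k0 by (simp add: prod.remove)
    also have "\<dots> \<le> \<bar>\<gamma>\<bar> * \<alpha> ^ (n - 1)"
    proof (rule mult_mono)
      show "\<bar>g (p!k0) (q!k0)\<bar> \<le> \<bar>\<gamma>\<bar>" using k0 by (simp add: g_def)
      have "(\<Prod>k\<in>{..<n}-{k0}. \<bar>g (p!k) (q!k)\<bar>) \<le> (\<Prod>k\<in>{..<n}-{k0}. \<alpha>)"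
        by (rule prod_mono) (simp add: gabs)
      also have "\<dots> = \<alpha> ^ (n - 1)" using k0 by simp
      finally show "(\<Prod>k\<in>{..<n}-{k0}. \<bar>g (p!k) (q!k)\<bar>) \<le> \<alpha> ^ (n - 1)" .
    qed (auto simp: prod_nonneg)
    also have "\<dots> < \<alpha> * \<alpha> ^ (n - 1)"
      using ag1 ag2 apos by (intro mult_strict_right_mono) auto
    also have "\<dots> = \<alpha> ^ n" using assms(2) by (cases n) auto
    finally show ?thesis .
  qed
  have offd: "v x y = 0" if xy: "x \<in> idx d n" "y \<in> idx d n" "x \<noteq> y" for x y
  proof -
    obtain k0 where k0: "k0 < n" "x!k0 \<noteq> y!k0"
      using diff_idx[OF idx_len[OF xy(1)] idx_len[OF xy(2)] xy(3)] by blast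
    show ?thesis unfolding v_def phi_comb_def
      by (rule sum.neutral) (use k0 in \<open>auto simp: Phi_def intro!: prod_zero\<close>)
  qed
  have Tv: "apply_op d n T v x x = (\<Sum>x'\<in>idx d n. of_real (G x x') * v x' x')" if x: "x \<in> idx d n" for x
  proof -
    have "apply_op d n T v x x = (\<Sum>x'\<in>idx d n. \<Sum>y'\<in>idx d n. if y' = x' then T x x x' x' * v x' x' else 0)"
      unfolding apply_op_def
      by (intro sum.cong refl) (auto simp: offd)
    also have "\<dots> = (\<Sum>x'\<in>idx d n. of_real (G x x') * v x' x')"
      using finite_idx by (intro sum.cong refl) (simp add: Tdiag x)
    finally show ?thesis .
  qed
  have nullv: "apply_op d n T v x x = 0" if "x \<in> idx d n" for x
    using null that by (simp add: in_null_space_def T_def v_def)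
  obtain p where p: "p \<in> idx d n" "v p p \<noteq> 0"
    using assms(5) offd unfolding nonzero_vec_def v_def by metis
  obtain r :: nat and u w where r: "r < 3" and dec: "\<forall>x\<in>idx d n. \<forall>y\<in>idx d n. v x y = (\<Sum>m<r. u m x * w m y)"
  proof -
    have ex: "\<exists>(r::nat) u w. \<forall>x\<in>idx d n. \<forall>y\<in>idx d n. v x y = (\<Sum>m<r. u m x * w m y)"
      by (rule exists_decomp)
    have "\<exists>u w. \<forall>x\<in>idx d n. \<forall>y\<in>idx d n. v x y = (\<Sum>m<schmidt_rank d n v. u m x * w m y)"
      unfolding schmidt_rank_def by (rule LeastI_ex[OF ex])
    then obtain u w where uw: "\<forall>x\<in>idx d n. \<forall>y\<in>idx d n. v x y = (\<Sum>m<schmidt_rank d n v. u m x * w m y)"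
      by blast
    show ?thesis
      by (rule that[of "schmidt_rank d n v" u w]) (use uw assms(6) in \<open>simp_all add: v_def\<close>)
  qed
  have three: "v p1 p1 * v p2 p2 * v p3 p3 = 0"
    if "p1 \<in> idx d n" "p2 \<in> idx d n" "p3 \<in> idx d n" "p1 \<noteq> p2" "p1 \<noteq> p3" "p2 \<noteq> p3" for p1 p2 p3
  proof -
    define A where "A = (\<lambda>x. if 0<r then u 0 x else 0)"
    define C where "C = (\<lambda>x. if 1<r then u 1 x else 0)"
    have e: "v x y = A x * w 0 y + C x * w 1 y" if "x \<in> idx d n" "y \<in> idx d n" for x y
    proof -
      have "v x y = (\<Sum>m<r. u m x * w m y)" using dec that by blast
      also have "\<dots> = A x * w 0 y + C x * w 1 y" unfolding A_def C_def by (rule rank2[OF r])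
      finally show ?thesis .
    qed
    show ?thesis
      using det3[of "A p1" "w 0 p2" "C p1" "w 1 p2" "w 0 p3" "w 1 p3" "A p2" "w 0 p1" "C p2" "w 1 p1"
                    "A p3" "C p3"]
      using that e offd by (metis (no_types, lifting))
  qed
  show False
  proof (cases "\<exists>q\<in>idx d n. q \<noteq> p \<and> v q q \<noteq> 0")
    case False
    have "apply_op d n T v p p = (\<Sum>x'\<in>idx d n. if x' = p then of_real (G p p) * v p p else 0)"
      using Tv[OF p(1)] False by (auto intro!: sum.cong)
    also have "\<dots> = of_real (\<alpha> ^ n) * v p p" using p finite_idx by (simp add: Gpp)
    finally show False using nullv[OF p(1)] p apos by simp
  next
    case True
    then obtain q where q: "q \<in> idx d n" "q \<noteq> p" "v q q \<noteq> 0" by blast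
    have others: "v s s = 0" if "s \<in> idx d n" "s \<noteq> p" "s \<noteq> q" for s
      using three[of p q s] that p q by auto
    have Tpq: "apply_op d n T v x x = of_real (G x p) * v p p + of_real (G x q) * v q q"
      if x: "x \<in> idx d n" for x
    proof -
      have "apply_op d n T v x x = (\<Sum>x'\<in>{p,q}. of_real (G x x') * v x' x')"
        unfolding Tv[OF x]
        by (rule sum.mono_neutral_right[OF finite_idx]) (use p q others in auto)
      also have "\<dots> = of_real (G x p) * v p p + of_real (G x q) * v q q" using q by simp
      finally show ?thesis .
    qed
    define a where "a = \<alpha> ^ n"
    define b where "b = G p q"
    have e1: "of_real a * v p p + of_real b * v q q = 0"
      using Tpq[OF p(1)] nullv[OF p(1)] by (simp add: a_def b_def Gpp)
    have e2: "of_real b * v p p + of_real a * v q q = 0"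
      using Tpq[OF q(1)] nullv[OF q(1)] Gsym[of q p] by (simp add: a_def b_def Gpp)
    have "of_real (a^2 - b^2) * v p p = of_real a * (of_real a * v p p + of_real b * v q q) - of_real b * (of_real b * v p p + of_real a * v q q)"
      by (simp add: algebra_simps power2_eq_square)
    also have "\<dots> = 0" using e1 e2 by simp
    finally have z: "of_real (a^2 - b^2) * v p p = 0" .
    have "\<bar>b\<bar> < a" using Gless[OF p(1) q(1) q(2)[symmetric]] by (simp add: a_def b_def)
    then have "\<bar>b\<bar>^2 < a^2" by (intro power_strict_mono) auto
    then have "a^2 - b^2 \<noteq> 0" by simp
    then have "complex_of_real (a^2 - b^2) \<noteq> 0" by (metis of_real_eq_0_iff)
    then show False using z p(2) by (metis mult_eq_0_iff)
  qed
qed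

end
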